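(* Let $q$ be a query program, $P$ a partial model, $\mathcal{T}$ a theory, and $P',\mathcal{T}'$ the partial model and theory produced by the witness-generation construction. If $M\in\mathit{solutions}(P',\mathcal{T}')$, then $M\in\mathit{solutions}(P,\mathcal{T})$.
   Context: Linear systems. Fix a large finite reserve $\mathcal{X}$ of integer variables. A system of linear inequalities $\mathcal{S}$ is a finite set of inequalities $\sum_j a_{ij}x_j\le y_i$ (equations are written as pairs of inequalities). A valuation $k:\mathcal{X}\to\mathbb{Z}$ is a solution of $\mathcal{S}$ ($k\vDash\mathcal{S}$) if it satisfies all of them; $\mathcal{S}_1\vDash\mathcal{S}_2$ means every solution of $\mathcal{S}_1$ is a solution of $\mathcal{S}_2$. Models. A metamodel is a signature $\Sigma$ of unary class symbols, binary relation symbols, a unary existence symbol $\varepsilon$ and a binary equality symbol $\sim$. A (scoped) partial model $P=\langle O_P,I_P,\mathcal{S}_P\rangle$ consists of a finite object set $O_P$, a 3-valued interpretation $I_P(\sigma):O_P^{\mathrm{arity}(\sigma)}\to\{0,1,\tfrac12\}$ for each $\sigma\in\Sigma$ ($\tfrac12$ = unknown), and a scope $\mathcal{S}_P$ (a system of linear inequalities). $P$ is concrete if all values are $0$ or $1$, $I_P(\varepsilon)(o)=1$ for all $o$, $I_P(\sim)(o_1,o_2)=1$ iff $o_1=o_2$, and $\mathcal{S}_P$ has a solution. Refinement: for $\mathit{abs}:O_Q\to O_P$, $P\succcurlyeq_{\mathit{abs}}Q$ holds if for all $\sigma$ and tuples $\bar q$, $I_P(\sigma)(\mathit{abs}(\bar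 q))$ is $\tfrac12$ or equals $I_Q(\sigma)(\bar q)$; every $p$ with $I_P(\varepsilon)(p)=1$ has a preimage under $\mathit{abs}$; and $\mathcal{S}_Q\vDash\mathcal{S}_P$. $P\succcurlyeq Q$ if $P\succcurlyeq_{\mathit{abs}}Q$ for some $\mathit{abs}$. For a first-order predicate $\varphi$ over $\Sigma$ with free variables $v_1,\dots,v_n$ and a concrete model $M$, $M\#\varphi$ is the number of maps $Z:\{v_1,\dots,v_n\}\to O_M$ under which $\varphi$ is true in $M$. A theory $\mathcal{T}=\langle\Phi,r\rangle$ is a finite set $\Phi$ of predicates with a map $r:\Phi\to\mathcal{X}$; a concrete $M$ is compatible with it ($M\vDash\mathcal{T}$) if $\mathcal{S}_M\vDash r(\varphi)=M\#\varphi$ for all $\varphi\in\Phi$. $\mathit{solutions}(P,\mathcal{T})$ is the set of concrete models $M$ with $P\succcurlyeq M$ and $M\vDash\mathcal{T}$. Program and IPET. $q$ is a query program generated from a graph-query search plan (nested for-loops implementing extend constraints and if-statements implementing check constraints). $\mathit{BB}$ is its set of basic blocks; its weighted CFG is $\langle V,E,s,t,w,\mathit{tr}\rangle$ with edges $E\subseteq V\times V$, start/end $s,t$, weights $w:E\to\mathbb{N}$, traceability $\mathit{tr}:V\to\mathit{BB}$. $f:E\to\mathcal{X}$ assigns distinct variables to edges. $\mathcal{S}_{\mathrm{IPET}}$ contains $\sum_{e=\langle s,n\rangle}f(e)=1$, $\sum_{e=\langle n,t\rangle}f(e)=1$, flow conservation at every $n\ne s,t$, $-f(e)\le0$, and possibly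 further low-level flow facts. Basic block predicates. For $bb\in\mathit{BB}$, $\psi_{bb}$ is the conjunction of the atomic predicates of all for/if statements enclosing $bb$ (extend atoms without their existential quantifier; check literals as-is); $\psi_{bb}=\mathrm{true}$ if none. If $bb$ is the header of loop $\ell$, also $\psi'_{bb}=\psi_{bb}\wedge(\text{atom of }\ell)$. $\Psi$ is the set of all these predicates. Witness generation. Given $P=\langle O_P,I_P,\mathcal{S}_P\rangle$ and $\mathcal{T}=\langle\Phi,r\rangle$ (with the range of $f$ disjoint from the range of $r$ and from the variables of $\mathcal{S}_P$), extend $r$ to $r'$ on $\Phi\cup\Psi$ by assigning to each $\psi\in\Psi$ a fresh distinct variable (not in the range of $f$, of $r$, or in $\mathcal{S}_P$). $\mathcal{S}_{\mathrm{merge}}$ contains for each $bb$: $r'(\psi_{bb})+r'(\psi'_{bb})-\sum_{e=\langle n_1,n_2\rangle\in E,\mathit{tr}(n_1)=bb}f(e)=0$ if $bb$ is a loop header, else $r'(\psi_{bb})-\sum_{e=\langle n_1,n_2\rangle\in E,\mathit{tr}(n_1)=bb}f(e)=0$. Set $P'=\langle O_P,I_P,\mathcal{S}_P\cup\mathcal{S}_{\mathrm{IPET}}\cup\mathcal{S}_{\mathrm{merge}}\rangle$ and $\mathcal{T}'=\langle\Phi\cup\Psi,r'\rangle$. *)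

theory Defs
  imports Main "HOL-Library.FuncSet"
begin

type_synonym 'x ineq = "('x \<Rightarrow> int) \<times> int"
  \<comment> \<open>(a, y) stands for the inequality  sum_j a_j x_j <= y\<close>

definition sat_ineq :: "('x::finite \<Rightarrow> int) \<Rightarrow> 'x ineq \<Rightarrow> bool" where
  "sat_ineq k i = ((\<Sum>x\<in>UNIV. fst i x * k x) \<le> snd i)"

definition solves :: "('x::finite \<Rightarrow> int) \<Rightarrow> 'x ineq set \<Rightarrow> bool" where
  "solves k S = (\<forall>i\<in>S. sat_ineq k i)"

definition entails :: "'x::finite ineq set \<Rightarrow> 'x ineq set \<Rightarrow> bool" where
  "entails S1 S2 = (\<forall>k. solves k S1 \<longrightarrow> solves k S2)"

definition lin_eq :: "('x \<Rightarrow> int) \<Rightarrow> int \<Rightarrow> 'x ineq set" where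
  "lin_eq a c = {(a, c), (\<lambda>x. - a x, - c)}"

definition lsys_vars :: "'x ineq set \<Rightarrow> 'x set" where
  "lsys_vars S = {x. \<exists>i\<in>S. fst i x \<noteq> 0}"

definition unit_vec :: "'x \<Rightarrow> 'x \<Rightarrow> int" where
  "unit_vec y = (\<lambda>x. if x = y then 1 else 0)"

datatype ('c, 'r) sym = Cls 'c | Rel 'r | Exi | Eqs

fun arity :: "('c, 'r) sym \<Rightarrow> nat" where
  "arity (Cls _) = 1"
| "arity (Rel _) = 2"
| "arity Exi = 1"
| "arity Eqs = 2"

datatype tv = tv0 | tv1 | tvU  \<comment> \<open>0, 1, 1/2 (unknown)\<close>

record ('o, 'c, 'r, 'x) pmodel =
  objs :: "'o set"
  interp :: "('c, 'r) sym \<Rightarrow> 'o list \<Rightarrow> tv"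
  scope :: "'x ineq set"

definition partial_model :: "('o, 'c, 'r, 'x) pmodel \<Rightarrow> bool" where
  "partial_model P = (finite (objs P) \<and> finite (scope P))"

definition tuples :: "('c, 'r) sym \<Rightarrow> 'o set \<Rightarrow> 'o list set" where
  "tuples \<sigma> A = {xs. length xs = arity \<sigma> \<and> set xs \<subseteq> A}"

definition concrete :: "('o, 'c, 'r, 'x::finite) pmodel \<Rightarrow> bool" where
  "concrete M = (partial_model M
     \<and> (\<forall>\<sigma>. \<forall>xs\<in>tuples \<sigma> (objs M). interp M \<sigma> xs \<in> {tv0, tv1})
     \<and> (\<forall>ob\<in>objs M. interp M Exi [ob] = tv1)
     \<and> (\<forall>o1\<in>objs M. \<forall>o2\<in>objs M. interp M Eqs [o1, o2] = tv1 \<longleftrightarrow> o1 = o2)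
     \<and> (\<exists>k. solves k (scope M)))"

definition refines_via ::
  "('p, 'c, 'r, 'x::finite) pmodel \<Rightarrow> ('q, 'c, 'r, 'x) pmodel \<Rightarrow> ('q \<Rightarrow> 'p) \<Rightarrow> bool" where
  "refines_via P Q ab = (ab ` objs Q \<subseteq> objs P
     \<and> (\<forall>\<sigma>. \<forall>qs\<in>tuples \<sigma> (objs Q).
           interp P \<sigma> (map ab qs) = tvU \<or> interp P \<sigma> (map ab qs) = interp Q \<sigma> qs)
     \<and> (\<forall>p\<in>objs P. interp P Exi [p] = tv1 \<longrightarrow> (\<exists>q\<in>objs Q. ab q = p))
     \<and> entails (scope Q) (scope P))"

definition refines :: "('p, 'c, 'r, 'x::finite) pmodel \<Rightarrow> ('q, 'c, 'r, 'x) pmodel \<Rightarrow> bool" where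
  "refines P Q = (\<exists>ab. refines_via P Q ab)"

datatype ('v, 'c, 'r) atom = ACls 'c 'v | ARel 'r 'v 'v | AExi 'v | AEq 'v 'v

fun atom_sym :: "('v, 'c, 'r) atom \<Rightarrow> ('c, 'r) sym" where
  "atom_sym (ACls c _) = Cls c"
| "atom_sym (ARel r _ _) = Rel r"
| "atom_sym (AExi _) = Exi"
| "atom_sym (AEq _ _) = Eqs"

fun atom_args :: "('v, 'c, 'r) atom \<Rightarrow> 'v list" where
  "atom_args (ACls _ v) = [v]"
| "atom_args (ARel _ u v) = [u, v]"
| "atom_args (AExi v) = [v]"
| "atom_args (AEq u v) = [u, v]"

datatype ('v, 'c, 'r) fo =
    FTrue
  | FAtom "('v, 'c, 'r) atom"
  | FNeg "('v, 'c, 'r) fo"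
  | FConj "('v, 'c, 'r) fo" "('v, 'c, 'r) fo"
  | FDisj "('v, 'c, 'r) fo" "('v, 'c, 'r) fo"
  | FEx 'v "('v, 'c, 'r) fo"
  | FAll 'v "('v, 'c, 'r) fo"

fun fv :: "('v, 'c, 'r) fo \<Rightarrow> 'v set" where
  "fv FTrue = {}"
| "fv (FAtom a) = set (atom_args a)"
| "fv (FNeg \<phi>) = fv \<phi>"
| "fv (FConj \<phi> \<psi>) = fv \<phi> \<union> fv \<psi>"
| "fv (FDisj \<phi> \<psi>) = fv \<phi> \<union> fv \<psi>"
| "fv (FEx v \<phi>) = fv \<phi> - {v}"
| "fv (FAll v \<phi>) = fv \<phi> - {v}"

fun holds :: "('o, 'c, 'r, 'x) pmodel \<Rightarrow> ('v \<Rightarrow> 'o) \<Rightarrow> ('v, 'c, 'r) fo \<Rightarrow> bool" where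
  "holds M Z FTrue = True"
| "holds M Z (FAtom a) = (interp M (atom_sym a) (map Z (atom_args a)) = tv1)"
| "holds M Z (FNeg \<phi>) = (\<not> holds M Z \<phi>)"
| "holds M Z (FConj \<phi> \<psi>) = (holds M Z \<phi> \<and> holds M Z \<psi>)"
| "holds M Z (FDisj \<phi> \<psi>) = (holds M Z \<phi> \<or> holds M Z \<psi>)"
| "holds M Z (FEx v \<phi>) = (\<exists>ob\<in>objs M. holds M (Z(v := ob)) \<phi>)"
| "holds M Z (FAll v \<phi>) = (\<forall>ob\<in>objs M. holds M (Z(v := ob)) \<phi>)"

definition match_count :: "('o, 'c, 'r, 'x) pmodel \<Rightarrow> ('v, 'c, 'r) fo \<Rightarrow> nat" where
  "match_count M \<phi> = card {Z \<in> fv \<phi> \<rightarrow>\<^sub>E objs M. holds M Z \<phi>}"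

text \<open>A theory is a pair (Phi, r) with Phi a finite set of predicates and r : Phi -> X.\<close>
definition theory_wf :: "('v, 'c, 'r) fo set \<Rightarrow> (('v, 'c, 'r) fo \<Rightarrow> 'x) \<Rightarrow> bool" where
  "theory_wf \<Phi> r = finite \<Phi>"

definition compatible ::
  "('o, 'c, 'r, 'x::finite) pmodel \<Rightarrow> ('v, 'c, 'r) fo set \<Rightarrow> (('v, 'c, 'r) fo \<Rightarrow> 'x) \<Rightarrow> bool" where
  "compatible M \<Phi> r = (\<forall>\<phi>\<in>\<Phi>.
     entails (scope M) (lin_eq (unit_vec (r \<phi>)) (int (match_count M \<phi>))))"

definition solutions ::
  "('p, 'c, 'r, 'x::finite) pmodel \<Rightarrow> ('v, 'c, 'r) fo set \<Rightarrow> (('v, 'c, 'r) fo \<Rightarrow> 'x)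
   \<Rightarrow> ('o, 'c, 'r, 'x) pmodel set" where
  "solutions P \<Phi> r = {M. concrete M \<and> refines P M \<and> compatible M \<Phi> r}"

text \<open>SFor b a body: a for-loop implementing the extend constraint with atom a, whose
  header is basic block b; SIf pos a body: an if-statement implementing the check
  literal a (pos) or not a (not pos); SBlock b: a plain basic block.\<close>
datatype ('b, 'v, 'c, 'r) stmt =
    SBlock 'b
  | SFor 'b "('v, 'c, 'r) atom" "('b, 'v, 'c, 'r) stmt list"
  | SIf bool "('v, 'c, 'r) atom" "('b, 'v, 'c, 'r) stmt list"

definition lit_fo :: "bool \<Rightarrow> ('v, 'c, 'r) atom \<Rightarrow> ('v, 'c, 'r) fo" where
  "lit_fo pos a = (if pos then FAtom a else FNeg (FAtom a))"

fun conj_list :: "('v, 'c, 'r) fo list \<Rightarrow> ('v, 'c, 'r) fo" where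
  "conj_list [] = FTrue"
| "conj_list [a] = a"
| "conj_list (a # as) = FConj a (conj_list as)"

text \<open>For every basic block: the list of atomic predicates of enclosing for/if statements,
  and, if the block is a loop header, the atom of that loop.\<close>
fun bbinfo :: "('v, 'c, 'r) fo list \<Rightarrow> ('b, 'v, 'c, 'r) stmt
               \<Rightarrow> ('b \<times> ('v, 'c, 'r) fo list \<times> ('v, 'c, 'r) atom option) list" where
  "bbinfo ctx (SBlock b) = [(b, ctx, None)]"
| "bbinfo ctx (SFor b a body) =
     (b, ctx, Some a) # concat (map (bbinfo (ctx @ [FAtom a])) body)"
| "bbinfo ctx (SIf pos a body) = concat (map (bbinfo (ctx @ [lit_fo pos a])) body)"

definition prog_info :: "('b, 'v, 'c, 'r) stmt list
    \<Rightarrow> ('b \<times> ('v, 'c, 'r) fo list \<times> ('v, 'c, 'r) atom option) list" where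
  "prog_info q = concat (map (bbinfo []) q)"

definition basic_blocks :: "('b, 'v, 'c, 'r) stmt list \<Rightarrow> 'b set" where
  "basic_blocks q = fst ` set (prog_info q)"

fun atom_vars :: "('v, 'c, 'r) atom \<Rightarrow> 'v set" where
  "atom_vars a = set (atom_args a)"

text \<open>Search-plan shape: each extend (loop) atom binds exactly one new variable,
  each check literal only uses already bound variables.\<close>
fun wf_stmt :: "'v set \<Rightarrow> ('b, 'v, 'c, 'r) stmt \<Rightarrow> bool" where
  "wf_stmt B (SBlock b) = True"
| "wf_stmt B (SFor b a body) =
     (\<exists>v. v \<notin> B \<and> atom_vars a - B = {v} \<and> (\<forall>s\<in>set body. wf_stmt (insert v B) s))"
| "wf_stmt B (SIf pos a body) = (atom_vars a \<subseteq> B \<and> (\<forall>s\<in>set body. wf_stmt B s))"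

definition query_program :: "('b, 'v, 'c, 'r) stmt list \<Rightarrow> bool" where
  "query_program q = ((\<forall>s\<in>set q. wf_stmt {} s) \<and> distinct (map fst (prog_info q)))"

definition psi :: "('b, 'v, 'c, 'r) stmt list \<Rightarrow> 'b \<Rightarrow> ('v, 'c, 'r) fo" where
  "psi q b = conj_list (fst (the (map_of (prog_info q) b)))"

definition psi' :: "('b, 'v, 'c, 'r) stmt list \<Rightarrow> 'b \<Rightarrow> ('v, 'c, 'r) fo option" where
  "psi' q b = (case the (map_of (prog_info q) b) of
                 (ctx, None) \<Rightarrow> None
               | (ctx, Some a) \<Rightarrow> Some (conj_list (ctx @ [FAtom a])))"

definition Psi :: "('b, 'v, 'c, 'r) stmt list \<Rightarrow> ('v, 'c, 'r) fo set" where
  "Psi q = psi q ` basic_blocks q \<union> {\<phi>. \<exists>b\<in>basic_blocks q. psi' q b = Some \<phi>}"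

definition wcfg :: "('b, 'v, 'c, 'r) stmt list \<Rightarrow> 'n set \<Rightarrow> ('n \<times> 'n) set \<Rightarrow> 'n \<Rightarrow> 'n
                    \<Rightarrow> ('n \<times> 'n \<Rightarrow> nat) \<Rightarrow> ('n \<Rightarrow> 'b) \<Rightarrow> bool" where
  "wcfg q V E s t w tr = (finite V \<and> E \<subseteq> V \<times> V \<and> s \<in> V \<and> t \<in> V
                          \<and> tr ` V \<subseteq> basic_blocks q)"

text \<open>Coefficient vector of the sum of f(e) over the edges in A (f injective on E).\<close>
definition edge_vec :: "('n \<times> 'n \<Rightarrow> 'x) \<Rightarrow> ('n \<times> 'n) set \<Rightarrow> 'x \<Rightarrow> int" where
  "edge_vec f A = (\<lambda>x. int (card {e\<in>A. f e = x}))"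

definition ipet_core :: "'n set \<Rightarrow> ('n \<times> 'n) set \<Rightarrow> 'n \<Rightarrow> 'n \<Rightarrow> ('n \<times> 'n \<Rightarrow> 'x)
                         \<Rightarrow> 'x ineq set" where
  "ipet_core V E s t f =
     lin_eq (edge_vec f {e\<in>E. fst e = s}) 1
   \<union> lin_eq (edge_vec f {e\<in>E. snd e = t}) 1
   \<union> (\<Union>n\<in>V - {s, t}. lin_eq (\<lambda>x. edge_vec f {e\<in>E. snd e = n} x
                                   - edge_vec f {e\<in>E. fst e = n} x) 0)
   \<union> {(\<lambda>x. - unit_vec (f e) x, 0) | e. e \<in> E}"

text \<open>S_IPET: the mandatory IPET constraints plus possibly further low-level flow facts
  (over the edge variables).\<close>
definition ipet_system :: "'n set \<Rightarrow> ('n \<times> 'n) set \<Rightarrow> 'n \<Rightarrow> 'n \<Rightarrow> ('n \<times> 'n \<Rightarrow> 'x)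
                           \<Rightarrow> 'x ineq set \<Rightarrow> bool" where
  "ipet_system V E s t f S = (finite S \<and> ipet_core V E s t f \<subseteq> S \<and> lsys_vars S \<subseteq> f ` E)"

definition merge_sys :: "('b, 'v, 'c, 'r) stmt list \<Rightarrow> ('n \<times> 'n) set \<Rightarrow> ('n \<Rightarrow> 'b)
      \<Rightarrow> ('n \<times> 'n \<Rightarrow> 'x) \<Rightarrow> (('v, 'c, 'r) fo \<Rightarrow> 'x) \<Rightarrow> 'x ineq set" where
  "merge_sys q E tr f r' =
     (\<Union>b\<in>basic_blocks q.
        lin_eq (\<lambda>x. unit_vec (r' (psi q b)) x
                    + (case psi' q b of None \<Rightarrow> 0 | Some \<phi> \<Rightarrow> unit_vec (r' \<phi>) x)
                    - edge_vec f {e\<in>E. tr (fst e) = b} x) 0)"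

definition witness_model :: "('o, 'c, 'r, 'x) pmodel \<Rightarrow> 'x ineq set \<Rightarrow> 'x ineq set
                             \<Rightarrow> ('o, 'c, 'r, 'x) pmodel" where
  "witness_model P S_IPET S_merge = P\<lparr>scope := scope P \<union> S_IPET \<union> S_merge\<rparr>"

definition fresh_extension :: "('v, 'c, 'r) fo set \<Rightarrow> (('v, 'c, 'r) fo \<Rightarrow> 'x)
     \<Rightarrow> ('v, 'c, 'r) fo set \<Rightarrow> 'x set \<Rightarrow> (('v, 'c, 'r) fo \<Rightarrow> 'x) \<Rightarrow> bool" where
  "fresh_extension \<Phi> r \<Psi>' used r' = ((\<forall>\<phi>\<in>\<Phi>. r' \<phi> = r \<phi>)
     \<and> inj_on r' (\<Psi>' - \<Phi>) \<and> (\<forall>\<psi>\<in>\<Psi>' - \<Phi>. r' \<psi> \<notin> used))"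

end

theory Submission
  imports Defs
begin

theorem lemmaA2:
  fixes P :: "('o, 'c, 'r, 'x::finite) pmodel"
    and M :: "('m, 'c, 'r, 'x) pmodel"
    and \<Phi> :: "('v, 'c, 'r) fo set" and r :: "('v, 'c, 'r) fo \<Rightarrow> 'x"
    and q :: "('b, 'v, 'c, 'r) stmt list"
    and V :: "'n set" and E :: "('n \<times> 'n) set" and s t :: 'n
    and w :: "'n \<times> 'n \<Rightarrow> nat" and tr :: "'n \<Rightarrow> 'b"
    and f :: "'n \<times> 'n \<Rightarrow> 'x" and S_IPET :: "'x ineq set"
    and r' :: "('v, 'c, 'r) fo \<Rightarrow> 'x"
  assumes "partial_model P"
    and "theory_wf \<Phi> r"
    and "query_program q"
    and "wcfg q V E s t w tr"
    and "inj_on f E"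
    and "ipet_system V E s t f S_IPET"
    and "f ` E \<inter> r ` \<Phi> = {}"
    and "f ` E \<inter> lsys_vars (scope P) = {}"
    and "fresh_extension \<Phi> r (Psi q) (f ` E \<union> r ` \<Phi> \<union> lsys_vars (scope P)) r'"
    and "M \<in> solutions (witness_model P S_IPET (merge_sys q E tr f r')) (\<Phi> \<union> Psi q) r'"
  shows "M \<in> solutions P \<Phi> r"
proof -
  let ?P' = "witness_model P S_IPET (merge_sys q E tr f r')"
  have M: "concrete M" "refines ?P' M" "compatible M (\<Phi> \<union> Psi q) r'"
    using assms(10) by (auto simp: solutions_def)
  have ent: "entails (scope ?P') (scope P)"
    by (auto simp: entails_def solves_def witness_model_def)
  have "refines P M"
  proof -
    obtain ab where ab: "refines_via ?P' M ab" using M(2) by (auto simp: refines_def)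
    have "entails (scope M) (scope P)"
      using ab ent unfolding refines_via_def entails_def by blast
    then have "refines_via P M ab"
      using ab by (simp add: refines_via_def witness_model_def)
    then show ?thesis by (auto simp: refines_def)
  qed
  moreover have "compatible M \<Phi> r"
    using M(3) assms(9) unfolding compatible_def fresh_extension_def by (metis UnI1)
  ultimately show ?thesis using M(1) by (simp add: solutions_def)
qed

end
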